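(* Let $G$ be a finite connected graph with girth at least $5$ and $\gamma(G)>\delta(G)$, and let $H$ be the graph obtained from $G$ by subdividing every edge of $G$ exactly once. Then $\mathrm{cc}(H)\ge \delta(G)+1$.
   Context: All graphs are finite, connected and reflexive (a loop at every vertex; moving along a loop means passing); loops are ignored for girth, degrees and neighbourhoods. $\gamma$ denotes domination number and $\delta$ minimum degree. Cops and Attacking Robbers: the cop player places $k$ cops on vertices, then the robber chooses a vertex. In each round the cops move (each cop moves to an adjacent vertex or passes), then the robber moves (to an adjacent vertex or passes). The cops win if after finitely many moves a cop moves onto the robber's vertex. Additionally, if the robber moves onto a vertex occupied by a cop, exactly one cop on that vertex is removed from the game; the robber's initial placement on a cop's vertex does not count as an attack. Both players play optimally. The attacking cop number $\mathrm{cc}(G)$ is the least $k$ such that $k$ cops can guarantee a win. *)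

theory Defs
  imports Main "HOL-Library.Extended_Nat"
begin

(* A finite simple graph: vertex set V, symmetric irreflexive edge relation E on V.
   Loops (reflexivity) are handled in the game, not in E. *)
definition simple_graph :: "'a set \<Rightarrow> ('a \<Rightarrow> 'a \<Rightarrow> bool) \<Rightarrow> bool" where
  "simple_graph V E \<longleftrightarrow> finite V \<and> V \<noteq> {} \<and>
     (\<forall>u v. E u v \<longrightarrow> u \<in> V \<and> v \<in> V) \<and>
     (\<forall>u v. E u v \<longrightarrow> E v u) \<and> (\<forall>v. \<not> E v v)"

definition connected_graph :: "'a set \<Rightarrow> ('a \<Rightarrow> 'a \<Rightarrow> bool) \<Rightarrow> bool" where
  "connected_graph V E \<longleftrightarrow> (\<forall>u\<in>V. \<forall>v\<in>V. E\<^sup>*\<^sup>* u v)"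

definition degree :: "('a \<Rightarrow> 'a \<Rightarrow> bool) \<Rightarrow> 'a \<Rightarrow> nat" where
  "degree E v = card {u. E v u}"

definition min_degree :: "'a set \<Rightarrow> ('a \<Rightarrow> 'a \<Rightarrow> bool) \<Rightarrow> nat" where
  "min_degree V E = Min (degree E ` V)"

definition dominating :: "'a set \<Rightarrow> ('a \<Rightarrow> 'a \<Rightarrow> bool) \<Rightarrow> 'a set \<Rightarrow> bool" where
  "dominating V E D \<longleftrightarrow> D \<subseteq> V \<and> (\<forall>v\<in>V. v \<in> D \<or> (\<exists>u\<in>D. E v u))"

definition domination_number :: "'a set \<Rightarrow> ('a \<Rightarrow> 'a \<Rightarrow> bool) \<Rightarrow> nat" where
  "domination_number V E = Min (card ` {D. dominating V E D})"

definition is_cycle :: "'a set \<Rightarrow> ('a \<Rightarrow> 'a \<Rightarrow> bool) \<Rightarrow> 'a list \<Rightarrow> bool" where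
  "is_cycle V E xs \<longleftrightarrow> length xs \<ge> 3 \<and> distinct xs \<and> set xs \<subseteq> V \<and>
     (\<forall>i < length xs. E (xs ! i) (xs ! ((i + 1) mod length xs)))"

(* girth = length of a shortest cycle; infinity if acyclic *)
definition girth :: "'a set \<Rightarrow> ('a \<Rightarrow> 'a \<Rightarrow> bool) \<Rightarrow> enat" where
  "girth V E = Inf {enat (length xs) | xs. is_cycle V E xs}"

(* subdivision: every edge {u,v} replaced by a new vertex Inr {u,v} adjacent to Inl u and Inl v *)
definition sub_edges :: "('a \<Rightarrow> 'a \<Rightarrow> bool) \<Rightarrow> 'a set set" where
  "sub_edges E = {{u, v} | u v. E u v}"

definition subdiv_V :: "'a set \<Rightarrow> ('a \<Rightarrow> 'a \<Rightarrow> bool) \<Rightarrow> ('a + 'a set) set" where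
  "subdiv_V V E = Inl ` V \<union> Inr ` sub_edges E"

definition subdiv_E :: "('a \<Rightarrow> 'a \<Rightarrow> bool) \<Rightarrow> ('a + 'a set) \<Rightarrow> ('a + 'a set) \<Rightarrow> bool" where
  "subdiv_E E x y \<longleftrightarrow> (\<exists>u e. e \<in> sub_edges E \<and> u \<in> e \<and>
      ((x = Inl u \<and> y = Inr e) \<or> (x = Inr e \<and> y = Inl u)))"

(* Cop positions are a list (one entry per remaining cop).
   cop_win V E cs r: it is the cops' turn, cops at cs, robber at r, and the cops can force
   a win in finitely many moves (least fixed point).  Otherwise the robber
   moves to r' (adjacent or stays); if r' holds cops, exactly one cop there is removed. *)
inductive cop_win :: "'a set \<Rightarrow> ('a \<Rightarrow> 'a \<Rightarrow> bool) \<Rightarrow> 'a list \<Rightarrow> 'a \<Rightarrow> bool"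
  for V E where
  step: "\<lbrakk> length cs' = length cs;
          \<forall>i < length cs. cs' ! i = cs ! i \<or> E (cs ! i) (cs' ! i);
          r \<in> set cs' \<or>
          (\<forall>r'. (r' = r \<or> E r r') \<longrightarrow> cop_win V E (remove1 r' cs') r') \<rbrakk>
         \<Longrightarrow> cop_win V E cs r"

definition cops_win_with :: "'a set \<Rightarrow> ('a \<Rightarrow> 'a \<Rightarrow> bool) \<Rightarrow> nat \<Rightarrow> bool" where
  "cops_win_with V E k \<longleftrightarrow> (\<exists>cs. length cs = k \<and> set cs \<subseteq> V \<and> (\<forall>r\<in>V. cop_win V E cs r))"

definition attacking_cop_number :: "'a set \<Rightarrow> ('a \<Rightarrow> 'a \<Rightarrow> bool) \<Rightarrow> nat" where
  "attacking_cop_number V E = (LEAST k. cops_win_with V E k)"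

end

theory Submission
  imports Defs
begin

definition N1 :: "'a \<Rightarrow> ('a + 'a set) set" where
  "N1 v = {Inl v} \<union> {Inr f | f. v \<in> f}"

definition D2 :: "('a \<Rightarrow> 'a \<Rightarrow> bool) \<Rightarrow> 'a \<Rightarrow> ('a + 'a set) set" where
  "D2 E x = {Inl x} \<union> {Inl y | y. E x y} \<union> {Inr f | f. x \<in> f}"

definition Bl :: "('a \<Rightarrow> 'a \<Rightarrow> bool) \<Rightarrow> 'a \<Rightarrow> ('a + 'a set) \<Rightarrow> 'a set" where
  "Bl E v q = {w. E v w \<and> q \<in> D2 E w \<and> q \<noteq> Inl v}"

lemma sE_ll[simp]: "\<not> subdiv_E E (Inl a) (Inl b)"
  by (auto simp: subdiv_E_def)
lemma sE_rr[simp]: "\<not> subdiv_E E (Inr a) (Inr b)"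
  by (auto simp: subdiv_E_def)
lemma sE_lr[simp]: "subdiv_E E (Inl u) (Inr e) \<longleftrightarrow> e \<in> sub_edges E \<and> u \<in> e"
  by (auto simp: subdiv_E_def)
lemma sE_rl[simp]: "subdiv_E E (Inr e) (Inl u) \<longleftrightarrow> e \<in> sub_edges E \<and> u \<in> e"
  by (auto simp: subdiv_E_def)

locale sgr =
  fixes V :: "'a set" and E :: "'a \<Rightarrow> 'a \<Rightarrow> bool"
  assumes sg: "simple_graph V E" and gi: "girth V E \<ge> 5"
begin

lemma fin: "finite V" using sg by (simp add: simple_graph_def)
lemma inV: "E u v \<Longrightarrow> u \<in> V \<and> v \<in> V" using sg by (simp add: simple_graph_def)
lemma sym: "E u v \<Longrightarrow> E v u" using sg by (simp add: simple_graph_def)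
lemma irr: "\<not> E v v" using sg by (simp add: simple_graph_def)

lemma cyc_len: "is_cycle V E xs \<Longrightarrow> length xs \<ge> 5"
proof -
  assume c: "is_cycle V E xs"
  have "girth V E \<le> enat (length xs)" unfolding girth_def
    by (rule Inf_lower) (use c in blast)
  with gi have "(5::enat) \<le> enat (length xs)" by (rule order_trans)
  then show ?thesis by (simp add: numeral_eq_enat)
qed

lemma no_tri: assumes "E a b" "E b c" "E c a" shows False
proof -
  have d: "a \<noteq> b" "b \<noteq> c" "a \<noteq> c" using assms irr by auto
  have "is_cycle V E [a,b,c]" unfolding is_cycle_def
  proof (intro conjI allI impI)
    fix i assume "i < length [a,b,c]"
    then have "i = 0 \<or> i = 1 \<or> i = 2" by auto
    then show "E ([a,b,c] ! i) ([a,b,c] ! ((i + 1) mod length [a,b,c]))"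
      using assms by auto
  qed (use d assms inV in auto)
  then show False using cyc_len by fastforce
qed

lemma no_sq: assumes "E a b" "E b c" "E c d" "E d a" "a \<noteq> c" "b \<noteq> d" shows False
proof -
  have d: "a \<noteq> b" "b \<noteq> c" "c \<noteq> d" "a \<noteq> d" using assms irr by auto
  have "is_cycle V E [a,b,c,d]" unfolding is_cycle_def
  proof (intro conjI allI impI)
    fix i assume "i < length [a,b,c,d]"
    then have "i = 0 \<or> i = 1 \<or> i = 2 \<or> i = 3" by auto
    then show "E ([a,b,c,d] ! i) ([a,b,c,d] ! ((i + 1) mod length [a,b,c,d]))"
      using assms by auto
  qed (use d assms inV in auto)
  then show False using cyc_len by fastforce
qed

lemma edge_mem: "f \<in> sub_edges E \<Longrightarrow> x \<in> f \<Longrightarrow> u \<in> f \<Longrightarrow> u = x \<or> E x u"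
  unfolding sub_edges_def using sym by auto

lemma edge_V: "f \<in> sub_edges E \<Longrightarrow> x \<in> f \<Longrightarrow> x \<in> V"
  unfolding sub_edges_def using inV by auto

lemma Bl_le1:
  assumes q: "q \<in> subdiv_V V E" and w1: "w1 \<in> Bl E v q" and w2: "w2 \<in> Bl E v q"
  shows "w1 = w2"
proof (rule ccontr)
  assume ne: "w1 \<noteq> w2"
  from w1 w2 have e1: "E v w1" and e2: "E v w2" and q1: "q \<in> D2 E w1" and q2: "q \<in> D2 E w2"
    and qv: "q \<noteq> Inl v" by (auto simp: Bl_def)
  show False
  proof (cases q)
    case (Inl u)
    with qv have uv: "u \<noteq> v" by auto
    from q1 q2 Inl have "(u = w1 \<or> E w1 u) \<and> (u = w2 \<or> E w2 u)" by (auto simp: D2_def)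
    then show False
    proof (elim conjE disjE)
      assume "u = w1" "u = w2" then show False using ne by simp
    next
      assume "u = w1" "E w2 u" then show False using no_tri[of v w1 w2] e1 e2 sym by blast
    next
      assume "E w1 u" "u = w2" then show False using no_tri[of v w1 w2] e1 e2 sym by blast
    next
      assume "E w1 u" "E w2 u"
      then show False using no_sq[of v w1 u w2] e1 e2 sym uv ne by blast
    qed
  next
    case (Inr f)
    with q have f: "f \<in> sub_edges E" by (auto simp: subdiv_V_def)
    from q1 q2 Inr have "w1 \<in> f" "w2 \<in> f" by (auto simp: D2_def)
    with f ne have "E w1 w2" using edge_mem by blast
    then show False using no_tri[of v w1 w2] e1 e2 sym by blast
  qed
qed


definition Inv :: "('a + 'a set) list \<Rightarrow> ('a + 'a set) \<Rightarrow> bool" where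
  "Inv cs r \<longleftrightarrow> length cs \<le> min_degree V E \<and> set cs \<subseteq> subdiv_V V E \<and>
     ((\<exists>v. r = Inl v \<and> v \<in> V \<and> (\<forall>c\<in>set cs. c \<notin> N1 v)) \<or>
      (\<exists>e x. r = Inr e \<and> e \<in> sub_edges E \<and> x \<in> e \<and> (\<forall>c\<in>set cs. c \<notin> D2 E x)))"

lemma moved:
  assumes "length cs' = length cs" "\<forall>i<length cs. cs' ! i = cs ! i \<or> subdiv_E E (cs ! i) (cs' ! i)"
    and "c' \<in> set cs'"
  shows "\<exists>c\<in>set cs. c' = c \<or> subdiv_E E c c'"
proof -
  from assms(3) obtain i where "i < length cs'" "c' = cs' ! i" by (auto simp: in_set_conv_nth)
  with assms(1,2) show ?thesis by (metis nth_mem)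
qed

lemma sE_V: "subdiv_E E c c' \<Longrightarrow> c' \<in> subdiv_V V E"
  unfolding subdiv_E_def subdiv_V_def using edge_V by blast

lemma deg_ge: "v \<in> V \<Longrightarrow> min_degree V E \<le> card {u. E v u}"
  unfolding min_degree_def degree_def using fin by (auto intro: Min_le)

lemma finN: "finite {u. E v u}"
  using fin inV by (metis (no_types, lifting) finite_subset mem_Collect_eq subsetI)

lemma step_ok:
  assumes inv: "Inv cs r" and lc: "length cs' = length cs"
    and mv: "\<forall>i<length cs. cs' ! i = cs ! i \<or> subdiv_E E (cs ! i) (cs' ! i)"
  shows "r \<notin> set cs' \<and> (\<exists>r'. (r' = r \<or> subdiv_E E r r') \<and> Inv (remove1 r' cs') r')"
proof -
  have mv': "\<And>c'. c' \<in> set cs' \<Longrightarrow> \<exists>c\<in>set cs. c' = c \<or> subdiv_E E c c'"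
    using moved[OF lc mv] by blast
  from inv have len: "length cs \<le> min_degree V E" and sub: "set cs \<subseteq> subdiv_V V E"
    by (auto simp: Inv_def)
  have sub': "set cs' \<subseteq> subdiv_V V E"
    using mv' sub sE_V by blast
  have len': "length cs' \<le> min_degree V E" using len lc by simp
  from inv consider (A) v where "r = Inl v" "v \<in> V" "\<forall>c\<in>set cs. c \<notin> N1 v"
    | (B) e x where "r = Inr e" "e \<in> sub_edges E" "x \<in> e" "\<forall>c\<in>set cs. c \<notin> D2 E x"
    by (auto simp: Inv_def)
  then show ?thesis
  proof cases
    case (A v)
    have nv: "Inl v \<notin> set cs'"
    proof
      assume "Inl v \<in> set cs'"
      then obtain c where c: "c \<in> set cs" "Inl v = c \<or> subdiv_E E c (Inl v)" using mv' by blast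
      have "c \<in> N1 v" using c(2) by (cases c) (auto simp: N1_def)
      with A c show False by blast
    qed
    show ?thesis
    proof (cases "\<exists>w. E v w \<and> (\<forall>c\<in>set cs'. c \<notin> D2 E w \<or> c = Inl v)")
      case True
      then obtain w where w: "E v w" "\<forall>c\<in>set cs'. c \<notin> D2 E w \<or> c = Inl v" by blast
      have ed: "{v,w} \<in> sub_edges E" using w(1) by (auto simp: sub_edges_def)
      have ni: "Inr {v,w} \<notin> set cs'" using w(2) by (auto simp: D2_def)
      have "Inv cs' (Inr {v,w})"
        unfolding Inv_def using len' sub' ed w(2) nv by blast
      moreover have "subdiv_E E (Inl v) (Inr {v,w})" using ed by simp
      ultimately show ?thesis using A nv ni by (metis remove1_idem)
    next
      case False
      then have blk: "\<And>w. E v w \<Longrightarrow> \<exists>c\<in>set cs'. w \<in> Bl E v c"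
        by (auto simp: Bl_def)
      show ?thesis
      proof (cases "\<forall>c\<in>set cs'. c \<notin> N1 v")
        case True
        have "Inv cs' (Inl v)" unfolding Inv_def using len' sub' True A by blast
        then show ?thesis using A nv by (auto simp: remove1_idem)
      next
        case False
        then obtain c where c: "c \<in> set cs'" "c \<in> N1 v" by blast
        with nv obtain f where cf: "c = Inr f" "v \<in> f" by (auto simp: N1_def)
        with c sub' have f: "f \<in> sub_edges E" by (auto simp: subdiv_V_def)
        then obtain x where fx: "f = {v,x}" "E v x"
          using cf(2) unfolding sub_edges_def using sym by auto
        have xB: "x \<in> Bl E v c" using cf fx by (auto simp: Bl_def D2_def)
        define rs where "rs = remove1 (Inr f) cs'"
        have good: "\<forall>c'\<in>set rs. c' \<notin> D2 E x"
        proof (rule ccontr)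
          assume "\<not> ?thesis"
          then obtain c0 where c0: "c0 \<in> set rs" "c0 \<in> D2 E x" by blast
          have c0s: "c0 \<in> set cs'" using c0(1) set_remove1_subset unfolding rs_def by fast
          have "c0 \<noteq> Inl v" using c0s nv by blast
          then have x0: "x \<in> Bl E v c0" using c0 fx by (auto simp: Bl_def)
          have cover: "{u. E v u} \<subseteq> (\<Union>c'\<in>set rs. Bl E v c')"
          proof
            fix w assume "w \<in> {u. E v u}"
            then obtain c' where c': "c' \<in> set cs'" "w \<in> Bl E v c'" using blk by blast
            show "w \<in> (\<Union>c'\<in>set rs. Bl E v c')"
            proof (cases "c' = Inr f")
              case True
              then have "c' = c" using cf by simp
              then have "w \<in> Bl E v c" using c'(2) by simp
              then have "w = x" using Bl_le1[of c w v x] xB c sub' by blast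
              then show ?thesis using x0 c0 by blast
            next
              case False
              then have "c' \<in> set rs" using c' unfolding rs_def by simp
              then show ?thesis using c' by blast
            qed
          qed
          have "card {u. E v u} \<le> card (\<Union>c'\<in>set rs. Bl E v c')"
          proof (rule card_mono)
            show "finite (\<Union>c'\<in>set rs. Bl E v c')"
              using finN by (rule finite_subset[rotated]) (auto simp: Bl_def)
          qed (rule cover)
          also have "\<dots> \<le> (\<Sum>c'\<in>set rs. card (Bl E v c'))" by (rule card_UN_le) simp
          also have "\<dots> \<le> (\<Sum>c'\<in>set rs. 1)"
          proof (rule sum_mono)
            fix c' assume "c' \<in> set rs"
            then have "c' \<in> subdiv_V V E" using sub' set_remove1_subset unfolding rs_def by fast
            have fb: "finite (Bl E v c')" using finN by (rule finite_subset[rotated]) (auto simp: Bl_def)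
            have "\<forall>a\<in>Bl E v c'. \<forall>b\<in>Bl E v c'. a = b" using Bl_le1 \<open>c' \<in> subdiv_V V E\<close> by blast
            then show "card (Bl E v c') \<le> 1" using card_le_Suc0_iff_eq[OF fb] by simp
          qed
          also have "\<dots> = card (set rs)" by simp
          also have "\<dots> \<le> length rs" by (rule card_length)
          also have "\<dots> < length cs'" unfolding rs_def using c cf
            using length_pos_if_in_set[of "Inr f" cs'] by (simp add: length_remove1)
          finally have "card {u. E v u} < min_degree V E" using len' by simp
          with deg_ge[OF A(2)] show False by simp
        qed
        have l1: "length rs \<le> min_degree V E" unfolding rs_def
          using len' length_remove1[of "Inr f" cs'] by (simp split: if_splits)
        have s1: "set rs \<subseteq> subdiv_V V E" unfolding rs_def
          using sub' set_remove1_subset[of "Inr f" cs'] by blast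
        have xf: "x \<in> f" using fx by simp
        have "Inv rs (Inr f)" unfolding Inv_def using l1 s1 f xf good by blast
        then have "Inv (remove1 (Inr f) cs') (Inr f)" unfolding rs_def .
        moreover have "subdiv_E E r (Inr f)" using A f cf by simp
        ultimately show ?thesis using nv A by blast
      qed
    qed
  next
    case (B e x)
    have xV: "x \<in> V" using B edge_V by blast
    have ni: "Inr e \<notin> set cs'"
    proof
      assume "Inr e \<in> set cs'"
      then obtain c where c: "c \<in> set cs" "Inr e = c \<or> subdiv_E E c (Inr e)" using mv' by blast
      have "c \<in> D2 E x"
      proof (cases c)
        case (Inl u)
        with c have "u \<in> e" by auto
        then have "u = x \<or> E x u" using edge_mem B by blast
        then show ?thesis using Inl by (auto simp: D2_def)
      qed (use c B in \<open>auto simp: D2_def\<close>)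
      with B c show False by blast
    qed
    have av: "\<forall>c'\<in>set cs'. c' \<notin> N1 x"
    proof (intro ballI notI)
      fix c' assume c': "c' \<in> set cs'" "c' \<in> N1 x"
      then obtain c where c: "c \<in> set cs" "c' = c \<or> subdiv_E E c c'" using mv' by blast
      have "c \<in> D2 E x"
      proof (cases c')
        case (Inl u)
        with c'(2) have "u = x" by (auto simp: N1_def)
        with c(2) Inl show ?thesis by (cases c) (auto simp: D2_def)
      next
        case (Inr f)
        with c'(2) have xf: "x \<in> f" by (auto simp: N1_def)
        show ?thesis
        proof (cases c)
          case (Inl u)
          with c Inr have "f \<in> sub_edges E" "u \<in> f" by auto
          then have "u = x \<or> E x u" using edge_mem xf by blast
          then show ?thesis using Inl by (auto simp: D2_def)
        qed (use c Inr xf in \<open>auto simp: D2_def\<close>)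
      qed
      with B c show False by blast
    qed
    have nx: "Inl x \<notin> set cs'" using av by (auto simp: N1_def)
    have "Inv cs' (Inl x)" unfolding Inv_def using len' sub' av xV by blast
    moreover have "subdiv_E E (Inr e) (Inl x)" using B by simp
    ultimately show ?thesis using B ni nx by (metis remove1_idem)
  qed
qed

lemma survive: "cop_win (subdiv_V V E) (subdiv_E E) cs r \<Longrightarrow> Inv cs r \<Longrightarrow> False"
proof (induction rule: cop_win.induct)
  case (step cs' cs r)
  from step_ok[OF step.prems step.hyps(1,2)] step show False by blast
qed


lemma no_win:
  assumes len: "length cs \<le> min_degree V E" and sub: "set cs \<subseteq> subdiv_V V E"
    and dom: "domination_number V E > min_degree V E"
  shows "\<exists>r\<in>subdiv_V V E. Inv cs r"
proof -
  define g where "g c = (case c of Inl u \<Rightarrow> u | Inr e \<Rightarrow> (SOME a. a \<in> e))" for c :: "'a + 'a set"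
  define D where "D = g ` set cs"
  have gr: "g (Inr e) \<in> e" if "Inr e \<in> set cs" for e
  proof -
    from that sub have "e \<in> sub_edges E" by (auto simp: subdiv_V_def)
    then have "\<exists>a. a \<in> e" by (auto simp: sub_edges_def)
    then have "(SOME a. a \<in> e) \<in> e" by (rule someI_ex)
    then show ?thesis unfolding g_def by simp
  qed
  have DV: "D \<subseteq> V"
  proof
    fix d assume "d \<in> D"
    then obtain c where c: "c \<in> set cs" "d = g c" by (auto simp: D_def)
    show "d \<in> V"
    proof (cases c)
      case (Inl u) then show ?thesis using c sub by (auto simp: subdiv_V_def g_def)
    next
      case (Inr e)
      then have "e \<in> sub_edges E" using c sub by (auto simp: subdiv_V_def)
      then show ?thesis using gr c Inr edge_V by blast
    qed
  qed
  have cD: "card D \<le> length cs" unfolding D_def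
    using card_image_le[of "set cs" g] card_length[of cs] by simp
  have "\<not> dominating V E D"
  proof
    assume dm: "dominating V E D"
    have "finite {D. dominating V E D}"
      by (rule finite_subset[of _ "Pow V"]) (auto simp: dominating_def fin)
    then have "domination_number V E \<le> card D" unfolding domination_number_def
      using dm by (auto intro: Min_le)
    with cD len dom show False by simp
  qed
  with DV obtain v where v: "v \<in> V" "v \<notin> D" "\<not> (\<exists>u\<in>D. E v u)"
    unfolding dominating_def by blast
  have av: "\<forall>c\<in>set cs. c \<notin> N1 v"
  proof (intro ballI notI)
    fix c assume c: "c \<in> set cs" "c \<in> N1 v"
    show False
    proof (cases c)
      case (Inl u)
      with c have "u = v" by (auto simp: N1_def)
      then have "v \<in> D" using c Inl by (auto simp: D_def g_def image_iff intro!: bexI[of _ c])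
      with v show False by simp
    next
      case (Inr e)
      with c have ve: "v \<in> e" by (auto simp: N1_def)
      have es: "e \<in> sub_edges E" using c sub Inr by (auto simp: subdiv_V_def)
      have gD: "g c \<in> D" using c by (simp add: D_def)
      have "g c \<in> e" using gr c Inr by blast
      then have "g c = v \<or> E v (g c)" using edge_mem es ve by blast
      with gD v show False by auto
    qed
  qed
  have "Inv cs (Inl v)" unfolding Inv_def using len sub v av by blast
  moreover have "Inl v \<in> subdiv_V V E" using v by (simp add: subdiv_V_def)
  ultimately show ?thesis by blast
qed

lemma win_exists: "\<exists>k. cops_win_with (subdiv_V V E) (subdiv_E E) k"
proof -
  have "finite (sub_edges E)"
    by (rule finite_subset[of _ "Pow V"]) (auto simp: sub_edges_def fin dest: inV)
  then have "finite (subdiv_V V E)" by (simp add: subdiv_V_def fin)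
  then obtain xs where xs: "set xs = subdiv_V V E" using finite_list by blast
  have "cop_win (subdiv_V V E) (subdiv_E E) xs r" if "r \<in> subdiv_V V E" for r
    by (rule cop_win.step[of xs]) (use that xs in auto)
  then show ?thesis unfolding cops_win_with_def using xs by blast
qed

lemma main:
  assumes dom: "domination_number V E > min_degree V E"
  shows "attacking_cop_number (subdiv_V V E) (subdiv_E E) \<ge> min_degree V E + 1"
proof (rule ccontr)
  assume "\<not> ?thesis"
  then have le: "attacking_cop_number (subdiv_V V E) (subdiv_E E) \<le> min_degree V E" by simp
  obtain k where "cops_win_with (subdiv_V V E) (subdiv_E E) k" using win_exists by blast
  then have "cops_win_with (subdiv_V V E) (subdiv_E E) (attacking_cop_number (subdiv_V V E) (subdiv_E E))"
    unfolding attacking_cop_number_def by (rule LeastI)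
  then obtain cs where cs: "length cs \<le> min_degree V E" "set cs \<subseteq> subdiv_V V E"
    "\<forall>r\<in>subdiv_V V E. cop_win (subdiv_V V E) (subdiv_E E) cs r"
    unfolding cops_win_with_def using le by (metis order_refl)
  from no_win[OF cs(1,2) dom] obtain r where "r \<in> subdiv_V V E" "Inv cs r" by blast
  with cs(3) survive show False by blast
qed

end

theorem lemma3:
  fixes V :: "'a set" and E :: "'a \<Rightarrow> 'a \<Rightarrow> bool"
  assumes "simple_graph V E"
    and "connected_graph V E"
    and "girth V E \<ge> 5"
    and "domination_number V E > min_degree V E"
  shows "attacking_cop_number (subdiv_V V E) (subdiv_E E) \<ge> min_degree V E + 1"
proof -
  interpret sgr V E using assms(1,3) by unfold_locales
  show ?thesis using main assms(4) by blast
qed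

end
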